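(* For every $x\in\mathcal X$, as $\mu\ge0$ increases: (1) $\hat p_{C^\mu(x)}(x)$ is non-decreasing; (2) $w(C^\mu(x))\hat p_{C^\mu(x)}(x)$ is non-increasing; (3) $D^\mu(x)$ is non-increasing; (4) $w(C^\mu(x))\hat p_{C^\mu(x)}(x)D^\mu(x)$ is non-increasing; (5) $(1-\hat p_{C^\mu(x)}(x)-\alpha)D^\mu(x)$ is non-increasing.
   Context: Let $\alpha\in(0,1)$. $\mathcal I$ is a finite collection of subsets of $\mathcal Y$ enumerated in a fixed lexicographic order, and $w:\mathcal I\to(0,B)$ a bounded positive weight. For $x\in\mathcal X$, $C\in\mathcal I$, $\hat p_C(x)\in[0,1]$ is a fixed estimate of $\mathbb P(Y\in C\mid X=x)$. For $\mu\ge0$ let $\hat\ell_{x,C}(\mu)=w(C)\hat p_C(x)+\mu(\hat p_C(x)-(1-\alpha))$. $C^\mu(x)$ is a maximizer of $\hat\ell_{x,C}(\mu)$ over $C\in\mathcal I$, ties broken in favor of the smallest weight $w(C)$ and then the smallest index; $D^\mu(x)=\mathbb 1\{\max_{C\in\mathcal I}\hat\ell_{x,C}(\mu)>0\}$. *)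

theory Defs
  imports Main "HOL.Real"
begin

text \<open>The finite collection I is given as a list Cs of distinct subsets of the
  outcome type 'y; the list order is the fixed (lexicographic) enumeration,
  so the index of C is its position in Cs.\<close>

definition ell :: "('y set \<Rightarrow> real) \<Rightarrow> ('x \<Rightarrow> 'y set \<Rightarrow> real) \<Rightarrow> real
    \<Rightarrow> 'x \<Rightarrow> 'y set \<Rightarrow> real \<Rightarrow> real" where
  "ell w phat \<alpha> x C \<mu> = w C * phat x C + \<mu> * (phat x C - (1 - \<alpha>))"

definition lmax :: "'y set list \<Rightarrow> ('y set \<Rightarrow> real) \<Rightarrow> ('x \<Rightarrow> 'y set \<Rightarrow> real)
    \<Rightarrow> real \<Rightarrow> 'x \<Rightarrow> real \<Rightarrow> real" where
  "lmax Cs w phat \<alpha> x \<mu> = Max ((\<lambda>C. ell w phat \<alpha> x C \<mu>) ` set Cs)"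

definition maximizers :: "'y set list \<Rightarrow> ('y set \<Rightarrow> real) \<Rightarrow> ('x \<Rightarrow> 'y set \<Rightarrow> real)
    \<Rightarrow> real \<Rightarrow> 'x \<Rightarrow> real \<Rightarrow> 'y set set" where
  "maximizers Cs w phat \<alpha> x \<mu> =
     {C \<in> set Cs. ell w phat \<alpha> x C \<mu> = lmax Cs w phat \<alpha> x \<mu>}"

definition Cmu :: "'y set list \<Rightarrow> ('y set \<Rightarrow> real) \<Rightarrow> ('x \<Rightarrow> 'y set \<Rightarrow> real)
    \<Rightarrow> real \<Rightarrow> 'x \<Rightarrow> real \<Rightarrow> 'y set" where
  "Cmu Cs w phat \<alpha> x \<mu> =
     Cs ! (LEAST i. i < length Cs \<and> Cs ! i \<in> maximizers Cs w phat \<alpha> x \<mu> \<and>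
                    w (Cs ! i) = Min (w ` maximizers Cs w phat \<alpha> x \<mu>))"

definition Dmu :: "'y set list \<Rightarrow> ('y set \<Rightarrow> real) \<Rightarrow> ('x \<Rightarrow> 'y set \<Rightarrow> real)
    \<Rightarrow> real \<Rightarrow> 'x \<Rightarrow> real \<Rightarrow> real" where
  "Dmu Cs w phat \<alpha> x \<mu> = (if lmax Cs w phat \<alpha> x \<mu> > 0 then 1 else 0)"

end

theory Submission
  imports Defs
begin

lemma Cmu_props:
  assumes ne: "Cs \<noteq> []"
  shows "Cmu Cs w phat \<alpha> x \<mu> \<in> set Cs \<and>
    (\<forall>C\<in>set Cs. ell w phat \<alpha> x C \<mu> \<le> ell w phat \<alpha> x (Cmu Cs w phat \<alpha> x \<mu>) \<mu>)
    \<and> lmax Cs w phat \<alpha> x \<mu> = ell w phat \<alpha> x (Cmu Cs w phat \<alpha> x \<mu>) \<mu>"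
proof -
  let ?f = "\<lambda>C. ell w phat \<alpha> x C \<mu>"
  let ?M = "maximizers Cs w phat \<alpha> x \<mu>"
  have fin: "finite (?f ` set Cs)" and nei: "?f ` set Cs \<noteq> {}" using ne by auto
  have "Max (?f ` set Cs) \<in> ?f ` set Cs" using Max_in[OF fin nei] .
  then obtain C0 where C0: "C0 \<in> set Cs" "?f C0 = lmax Cs w phat \<alpha> x \<mu>"
    unfolding lmax_def by auto
  have Mne: "?M \<noteq> {}" using C0 unfolding maximizers_def by auto
  have Mfin: "finite ?M" unfolding maximizers_def by auto
  have "Min (w ` ?M) \<in> w ` ?M" using Mne Mfin by (intro Min_in) auto
  then obtain C1 where C1: "C1 \<in> ?M" "w C1 = Min (w ` ?M)" by auto
  then have "C1 \<in> set Cs" unfolding maximizers_def by auto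
  then obtain i where i: "i < length Cs" "Cs ! i = C1" by (auto simp: in_set_conv_nth)
  let ?P = "\<lambda>i. i < length Cs \<and> Cs ! i \<in> ?M \<and> w (Cs ! i) = Min (w ` ?M)"
  have "?P i" using i C1 by auto
  then have P: "?P (LEAST i. ?P i)" by (rule LeastI)
  have eq: "Cmu Cs w phat \<alpha> x \<mu> = Cs ! (LEAST i. ?P i)" unfolding Cmu_def by simp
  have mem: "Cmu Cs w phat \<alpha> x \<mu> \<in> ?M" using P eq by simp
  have le: "\<forall>C\<in>set Cs. ?f C \<le> lmax Cs w phat \<alpha> x \<mu>"
    unfolding lmax_def using fin by auto
  show ?thesis using mem le unfolding maximizers_def by auto
qed

lemma pos_lemma:
  fixes a p m c :: real
  assumes "0 < a" "p > c" "0 \<le> m" "0 \<le> c"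
  shows "a * p + m * (p - c) > 0"
proof -
  have "a * p > 0" using assms by simp
  moreover have "m * (p - c) \<ge> 0" using assms by simp
  ultimately show ?thesis by linarith
qed

theorem proposition9:
  fixes Cs :: "'y set list" and w :: "'y set \<Rightarrow> real"
    and phat :: "'x \<Rightarrow> 'y set \<Rightarrow> real" and \<alpha> B :: real
  assumes alpha: "0 < \<alpha>" "\<alpha> < 1"
    and distinct: "distinct Cs" and nonempty: "Cs \<noteq> []"
    and wpos: "\<And>C. C \<in> set Cs \<Longrightarrow> 0 < w C \<and> w C < B"
    and prange: "\<And>x C. C \<in> set Cs \<Longrightarrow> 0 \<le> phat x C \<and> phat x C \<le> 1"
  shows "\<forall>x \<mu>1 \<mu>2. 0 \<le> \<mu>1 \<and> \<mu>1 \<le> \<mu>2 \<longrightarrow>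
      phat x (Cmu Cs w phat \<alpha> x \<mu>1) \<le> phat x (Cmu Cs w phat \<alpha> x \<mu>2)
    \<and> w (Cmu Cs w phat \<alpha> x \<mu>2) * phat x (Cmu Cs w phat \<alpha> x \<mu>2)
        \<le> w (Cmu Cs w phat \<alpha> x \<mu>1) * phat x (Cmu Cs w phat \<alpha> x \<mu>1)
    \<and> Dmu Cs w phat \<alpha> x \<mu>2 \<le> Dmu Cs w phat \<alpha> x \<mu>1
    \<and> w (Cmu Cs w phat \<alpha> x \<mu>2) * phat x (Cmu Cs w phat \<alpha> x \<mu>2) * Dmu Cs w phat \<alpha> x \<mu>2
        \<le> w (Cmu Cs w phat \<alpha> x \<mu>1) * phat x (Cmu Cs w phat \<alpha> x \<mu>1) * Dmu Cs w phat \<alpha> x \<mu>1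
    \<and> (1 - phat x (Cmu Cs w phat \<alpha> x \<mu>2) - \<alpha>) * Dmu Cs w phat \<alpha> x \<mu>2
        \<le> (1 - phat x (Cmu Cs w phat \<alpha> x \<mu>1) - \<alpha>) * Dmu Cs w phat \<alpha> x \<mu>1"
proof (intro allI impI)
  fix x and \<mu>1 \<mu>2 :: real
  assume mu: "0 \<le> \<mu>1 \<and> \<mu>1 \<le> \<mu>2"
  define C1 where "C1 = Cmu Cs w phat \<alpha> x \<mu>1"
  define C2 where "C2 = Cmu Cs w phat \<alpha> x \<mu>2"
  define D1 where "D1 = Dmu Cs w phat \<alpha> x \<mu>1"
  define D2 where "D2 = Dmu Cs w phat \<alpha> x \<mu>2"
  note P1 = Cmu_props[OF nonempty, of w phat \<alpha> x \<mu>1, folded C1_def]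
  note P2 = Cmu_props[OF nonempty, of w phat \<alpha> x \<mu>2, folded C2_def]
  have C1in: "C1 \<in> set Cs" and C2in: "C2 \<in> set Cs" using P1 P2 by auto
  have o1: "ell w phat \<alpha> x C2 \<mu>1 \<le> ell w phat \<alpha> x C1 \<mu>1" using P1 C2in by auto
  have o2: "ell w phat \<alpha> x C1 \<mu>2 \<le> ell w phat \<alpha> x C2 \<mu>2" using P2 C1in by auto
  have p1: "phat x C1 \<le> phat x C2"
  proof (cases "\<mu>1 = \<mu>2")
    case True then show ?thesis unfolding C1_def C2_def by simp
  next
    case False
    then have "\<mu>1 < \<mu>2" using mu by auto
    moreover have "(\<mu>2 - \<mu>1) * (phat x C2 - phat x C1) \<ge> 0"
      using o1 o2 unfolding ell_def by (simp add: algebra_simps)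
    ultimately show ?thesis by (simp add: zero_le_mult_iff)
  qed
  have a: "w C2 * phat x C2 \<le> w C1 * phat x C1"
  proof -
    have "\<mu>1 * (phat x C2 - phat x C1) \<ge> 0" using mu p1 by simp
    then show ?thesis using o1 unfolding ell_def by (simp add: algebra_simps)
  qed
  have D01: "D1 = 0 \<or> D1 = 1" "D2 = 0 \<or> D2 = 1" unfolding D1_def D2_def Dmu_def by auto
  have allp: "\<forall>C\<in>set Cs. phat x C \<le> 1 - \<alpha>" if "D2 = 0"
  proof
    fix C assume C: "C \<in> set Cs"
    have "ell w phat \<alpha> x C \<mu>2 \<le> 0" using that P2 C unfolding D2_def Dmu_def
      by (auto split: if_splits)
    moreover have "0 < w C" "0 \<le> phat x C" using wpos[OF C] prange[OF C] by auto
    ultimately show "phat x C \<le> 1 - \<alpha>" unfolding ell_def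
      using pos_lemma[where a="w C" and p="phat x C" and m=\<mu>2 and c="1 - \<alpha>"] mu alpha by linarith
  qed
  have D: "D2 \<le> D1"
  proof (rule ccontr)
    assume "\<not> D2 \<le> D1"
    then have d: "D1 = 0" "D2 = 1" using D01 by auto
    have "ell w phat \<alpha> x C1 \<mu>1 \<le> 0" using d(1) P1 unfolding D1_def Dmu_def
      by (auto split: if_splits)
    have le: "\<forall>C\<in>set Cs. ell w phat \<alpha> x C \<mu>2 \<le> 0"
    proof
      fix C assume C: "C \<in> set Cs"
      have l1: "ell w phat \<alpha> x C \<mu>1 \<le> 0"
        using P1 C \<open>ell w phat \<alpha> x C1 \<mu>1 \<le> 0\<close> by force
      have "0 < w C" "0 \<le> phat x C" using wpos[OF C] prange[OF C] by auto
      then have "phat x C \<le> 1 - \<alpha>" using l1 mu unfolding ell_def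
        using pos_lemma[where a="w C" and p="phat x C" and m=\<mu>1 and c="1 - \<alpha>"] alpha by linarith
      then have "\<mu>2 * (phat x C - (1 - \<alpha>)) \<le> \<mu>1 * (phat x C - (1 - \<alpha>))"
        using mu by (intro mult_right_mono_neg) auto
      then show "ell w phat \<alpha> x C \<mu>2 \<le> 0" using l1 unfolding ell_def by simp
    qed
    have "ell w phat \<alpha> x C2 \<mu>2 > 0" using d(2) P2 unfolding D2_def Dmu_def
      by (auto split: if_splits)
    then show False using le C2in by auto
  qed
  have wp1: "0 \<le> w C1 * phat x C1" using wpos[OF C1in] prange[OF C1in] by simp
  have four: "w C2 * phat x C2 * D2 \<le> w C1 * phat x C1 * D1"
    using D01 D a wp1 by auto
  have five: "(1 - phat x C2 - \<alpha>) * D2 \<le> (1 - phat x C1 - \<alpha>) * D1"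
    using D01 D p1 allp[rule_format, OF _ C1in] by auto
  show "phat x C1 \<le> phat x C2 \<and> w C2 * phat x C2 \<le> w C1 * phat x C1 \<and> D2 \<le> D1 \<and>
    w C2 * phat x C2 * D2 \<le> w C1 * phat x C1 * D1 \<and>
    (1 - phat x C2 - \<alpha>) * D2 \<le> (1 - phat x C1 - \<alpha>) * D1"
    using p1 a D four five by auto
qed

end
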